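(* Let $n\ge0$ and let $\mathfrak g_1,\mathfrak g_2$ be Leibniz algebras. Then $\mathfrak g_1\sim_n\mathfrak g_2$ if and only if there exist a Leibniz algebra $\mathfrak h$ with $\mathfrak h\sim_n\mathfrak g_1$ and a surjective Leibniz algebra homomorphism $\theta:\mathfrak h\to\mathfrak g_2$ such that $\operatorname{Ker}(\theta)\cap\gamma_{n+1}^{\mathsf{Lie}}(\mathfrak h)=0$.
   Context: All Leibniz algebras are over a field $\mathbb{K}$ with $\frac12\in\mathbb{K}$. A Leibniz algebra is a vector space $\mathfrak g$ with a bilinear bracket $[-,-]$ satisfying $[x,[y,z]]=[[x,y],z]-[[x,z],y]$. For $x,y\in\mathfrak g$ put $[x,y]_{lie}=[x,y]+[y,x]$. For two-sided ideals $\mathfrak m,\mathfrak n$ of $\mathfrak g$, $[\mathfrak m,\mathfrak n]_{\mathsf{Lie}}$ denotes the two-sided ideal of $\mathfrak g$ generated by $\{[m,x]_{lie}: m\in\mathfrak m, x\in\mathfrak n\}$. Lower Lie-central series: $\gamma_1^{\mathsf{Lie}}(\mathfrak g)=\mathfrak g$, $\gamma_i^{\mathsf{Lie}}(\mathfrak g)=[\gamma_{i-1}^{\mathsf{Lie}}(\mathfrak g),\mathfrak g]_{\mathsf{Lie}}$ for $i\ge2$. Upper Lie-central series: $\mathcal Z_0^{\mathsf{Lie}}(\mathfrak g)=0$, $\mathcal Z_i^{\mathsf{Lie}}(\mathfrak g)=\{x\in\mathfrak g:[x,y]_{lie}\in\mathcal Z_{i-1}^{\mathsf{Lie}}(\mathfrak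 g)\ \text{for all } y\in\mathfrak g\}$ for $i\ge1$. For $n\ge0$, Leibniz algebras $\mathfrak g_1,\mathfrak g_2$ are $n$-Lie-isoclinic, written $\mathfrak g_1\sim_n\mathfrak g_2$, if there exist Leibniz algebra isomorphisms $\eta:\mathfrak g_1/\mathcal Z_n^{\mathsf{Lie}}(\mathfrak g_1)\to\mathfrak g_2/\mathcal Z_n^{\mathsf{Lie}}(\mathfrak g_2)$ and $\xi:\gamma_{n+1}^{\mathsf{Lie}}(\mathfrak g_1)\to\gamma_{n+1}^{\mathsf{Lie}}(\mathfrak g_2)$ such that $\xi([\cdots[[x_1,x_2]_{lie},x_3]_{lie},\ldots,x_{n+1}]_{lie})=[\cdots[[y_1,y_2]_{lie},y_3]_{lie},\ldots,y_{n+1}]_{lie}$ whenever $x_i\in\mathfrak g_1$, $y_i\in\mathfrak g_2$ satisfy $\eta(x_i+\mathcal Z_n^{\mathsf{Lie}}(\mathfrak g_1))=y_i+\mathcal Z_n^{\mathsf{Lie}}(\mathfrak g_2)$ for $i=1,\ldots,n+1$. *)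

theory Defs
  imports Main
begin

record ('k, 'a) lalg =
  carr  :: "'a set"
  ladd  :: "'a \<Rightarrow> 'a \<Rightarrow> 'a"
  lzero :: "'a"
  lsmul :: "'k \<Rightarrow> 'a \<Rightarrow> 'a"
  lbr   :: "'a \<Rightarrow> 'a \<Rightarrow> 'a"

definition vspace :: "('k::field, 'a) lalg \<Rightarrow> bool" where
  "vspace L \<longleftrightarrow>
     lzero L \<in> carr L \<and>
     (\<forall>x\<in>carr L. \<forall>y\<in>carr L. ladd L x y \<in> carr L) \<and>
     (\<forall>c. \<forall>x\<in>carr L. lsmul L c x \<in> carr L) \<and>
     (\<forall>x\<in>carr L. \<forall>y\<in>carr L. \<forall>z\<in>carr L. ladd L (ladd L x y) z = ladd L x (ladd L y z)) \<and>
     (\<forall>x\<in>carr L. \<forall>y\<in>carr L. ladd L x y = ladd L y x) \<and>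
     (\<forall>x\<in>carr L. ladd L (lzero L) x = x) \<and>
     (\<forall>x\<in>carr L. \<exists>y\<in>carr L. ladd L x y = lzero L) \<and>
     (\<forall>c. \<forall>x\<in>carr L. \<forall>y\<in>carr L. lsmul L c (ladd L x y) = ladd L (lsmul L c x) (lsmul L c y)) \<and>
     (\<forall>c d. \<forall>x\<in>carr L. lsmul L (c + d) x = ladd L (lsmul L c x) (lsmul L d x)) \<and>
     (\<forall>c d. \<forall>x\<in>carr L. lsmul L (c * d) x = lsmul L c (lsmul L d x)) \<and>
     (\<forall>x\<in>carr L. lsmul L 1 x = x)"

text \<open>Leibniz algebra: vector space, bilinear bracket closed on the carrier,
and the Leibniz identity [x,[y,z]] = [[x,y],z] - [[x,z],y], written additively.\<close>

definition leibniz :: "('k::field, 'a) lalg \<Rightarrow> bool" where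
  "leibniz L \<longleftrightarrow> vspace L \<and>
     (\<forall>x\<in>carr L. \<forall>y\<in>carr L. lbr L x y \<in> carr L) \<and>
     (\<forall>x\<in>carr L. \<forall>y\<in>carr L. \<forall>z\<in>carr L.
        lbr L (ladd L x y) z = ladd L (lbr L x z) (lbr L y z) \<and>
        lbr L z (ladd L x y) = ladd L (lbr L z x) (lbr L z y)) \<and>
     (\<forall>c. \<forall>x\<in>carr L. \<forall>y\<in>carr L.
        lbr L (lsmul L c x) y = lsmul L c (lbr L x y) \<and>
        lbr L x (lsmul L c y) = lsmul L c (lbr L x y)) \<and>
     (\<forall>x\<in>carr L. \<forall>y\<in>carr L. \<forall>z\<in>carr L.
        ladd L (lbr L x (lbr L y z)) (lbr L (lbr L x z) y) = lbr L (lbr L x y) z)"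

definition lie_br :: "('k, 'a) lalg \<Rightarrow> 'a \<Rightarrow> 'a \<Rightarrow> 'a" where
  "lie_br L x y = ladd L (lbr L x y) (lbr L y x)"

definition subspace :: "('k, 'a) lalg \<Rightarrow> 'a set \<Rightarrow> bool" where
  "subspace L I \<longleftrightarrow> I \<subseteq> carr L \<and> lzero L \<in> I \<and>
     (\<forall>x\<in>I. \<forall>y\<in>I. ladd L x y \<in> I) \<and> (\<forall>c. \<forall>x\<in>I. lsmul L c x \<in> I)"

definition ideal :: "('k, 'a) lalg \<Rightarrow> 'a set \<Rightarrow> bool" where
  "ideal L I \<longleftrightarrow> subspace L I \<and>
     (\<forall>x\<in>I. \<forall>y\<in>carr L. lbr L x y \<in> I \<and> lbr L y x \<in> I)"

definition ideal_gen :: "('k, 'a) lalg \<Rightarrow> 'a set \<Rightarrow> 'a set" where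
  "ideal_gen L X = \<Inter> {I. ideal L I \<and> X \<subseteq> I}"

definition lie_comm :: "('k, 'a) lalg \<Rightarrow> 'a set \<Rightarrow> 'a set \<Rightarrow> 'a set" where
  "lie_comm L M N = ideal_gen L {lie_br L m x | m x. m \<in> M \<and> x \<in> N}"

text \<open>Lower Lie-central series with the paper's indexing: gamma_lie L i for i \<ge> 1
(gamma_lie L 0 is set to the whole algebra as well, it is never used).\<close>
fun gamma_lie :: "('k, 'a) lalg \<Rightarrow> nat \<Rightarrow> 'a set" where
  "gamma_lie L 0 = carr L"
| "gamma_lie L (Suc 0) = carr L"
| "gamma_lie L (Suc (Suc i)) = lie_comm L (gamma_lie L (Suc i)) (carr L)"

fun zeta_lie :: "('k, 'a) lalg \<Rightarrow> nat \<Rightarrow> 'a set" where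
  "zeta_lie L 0 = {lzero L}"
| "zeta_lie L (Suc i) = {x \<in> carr L. \<forall>y\<in>carr L. lie_br L x y \<in> zeta_lie L i}"

fun lie_iter :: "('k, 'a) lalg \<Rightarrow> (nat \<Rightarrow> 'a) \<Rightarrow> nat \<Rightarrow> 'a" where
  "lie_iter L x 0 = x 0"
| "lie_iter L x (Suc k) = lie_br L (lie_iter L x k) (x (Suc k))"

definition coset :: "('k, 'a) lalg \<Rightarrow> 'a set \<Rightarrow> 'a \<Rightarrow> 'a set" where
  "coset L I x = {ladd L x z | z. z \<in> I}"

definition quot :: "('k, 'a) lalg \<Rightarrow> 'a set \<Rightarrow> ('k, 'a set) lalg" where
  "quot L I = \<lparr> carr = coset L I ` carr L,
      ladd = (\<lambda>A B. coset L I (ladd L (SOME a. a \<in> A) (SOME b. b \<in> B))),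
      lzero = coset L I (lzero L),
      lsmul = (\<lambda>c A. coset L I (lsmul L c (SOME a. a \<in> A))),
      lbr = (\<lambda>A B. coset L I (lbr L (SOME a. a \<in> A) (SOME b. b \<in> B))) \<rparr>"

definition lhom :: "('k, 'a) lalg \<Rightarrow> ('k, 'b) lalg \<Rightarrow> ('a \<Rightarrow> 'b) \<Rightarrow> bool" where
  "lhom L M f \<longleftrightarrow> (\<forall>x\<in>carr L. f x \<in> carr M) \<and>
     (\<forall>x\<in>carr L. \<forall>y\<in>carr L. f (ladd L x y) = ladd M (f x) (f y) \<and>
                            f (lbr L x y) = lbr M (f x) (f y)) \<and>
     (\<forall>c. \<forall>x\<in>carr L. f (lsmul L c x) = lsmul M c (f x))"

definition liso :: "('k, 'a) lalg \<Rightarrow> ('k, 'b) lalg \<Rightarrow> ('a \<Rightarrow> 'b) \<Rightarrow> bool" where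
  "liso L M f \<longleftrightarrow> lhom L M f \<and> bij_betw f (carr L) (carr M)"

definition isoclinic :: "nat \<Rightarrow> ('k, 'a) lalg \<Rightarrow> ('k, 'b) lalg \<Rightarrow> bool" where
  "isoclinic n L1 L2 \<longleftrightarrow>
     (\<exists>\<eta> \<xi>. liso (quot L1 (zeta_lie L1 n)) (quot L2 (zeta_lie L2 n)) \<eta> \<and>
       liso (L1\<lparr>carr := gamma_lie L1 (Suc n)\<rparr>) (L2\<lparr>carr := gamma_lie L2 (Suc n)\<rparr>) \<xi> \<and>
       (\<forall>x y. (\<forall>i\<le>n. x i \<in> carr L1 \<and> y i \<in> carr L2 \<and>
                 \<eta> (coset L1 (zeta_lie L1 n) (x i)) = coset L2 (zeta_lie L2 n) (y i))
              \<longrightarrow> \<xi> (lie_iter L1 x n) = lie_iter L2 y n))"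

definition lkernel :: "('k, 'a) lalg \<Rightarrow> ('k, 'b) lalg \<Rightarrow> ('a \<Rightarrow> 'b) \<Rightarrow> 'a set" where
  "lkernel L M f = {x \<in> carr L. f x = lzero M}"

end

theory Submission
  imports Defs
begin



locale LA = fixes L :: "('k::field, 'a) lalg" assumes LL: "leibniz L"
begin

lemma zero_closed[simp]: "lzero L \<in> carr L" using LL unfolding leibniz_def vspace_def by (elim conjE) blast
lemma add_closed[simp]: "x \<in> carr L \<Longrightarrow> y \<in> carr L \<Longrightarrow> ladd L x y \<in> carr L"
  using LL unfolding leibniz_def vspace_def by (elim conjE) blast
lemma smul_closed[simp]: "x \<in> carr L \<Longrightarrow> lsmul L c x \<in> carr L"
  using LL unfolding leibniz_def vspace_def by (elim conjE) blast
lemma br_closed[simp]: "x \<in> carr L \<Longrightarrow> y \<in> carr L \<Longrightarrow> lbr L x y \<in> carr L"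
  using LL unfolding leibniz_def vspace_def by (elim conjE) blast
lemma add_assoc: "x \<in> carr L \<Longrightarrow> y \<in> carr L \<Longrightarrow> z \<in> carr L \<Longrightarrow> ladd L (ladd L x y) z = ladd L x (ladd L y z)"
  using LL unfolding leibniz_def vspace_def by (elim conjE) blast
lemma add_comm: "x \<in> carr L \<Longrightarrow> y \<in> carr L \<Longrightarrow> ladd L x y = ladd L y x"
  using LL unfolding leibniz_def vspace_def by (elim conjE) blast
lemma add_lcomm: "x \<in> carr L \<Longrightarrow> y \<in> carr L \<Longrightarrow> z \<in> carr L \<Longrightarrow> ladd L x (ladd L y z) = ladd L y (ladd L x z)"
  by (metis add_assoc add_comm)
lemmas add_ac = add_assoc add_comm add_lcomm
lemma zero_add[simp]: "x \<in> carr L \<Longrightarrow> ladd L (lzero L) x = x"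
  using LL unfolding leibniz_def vspace_def by (elim conjE) blast
lemma add_zero[simp]: "x \<in> carr L \<Longrightarrow> ladd L x (lzero L) = x"
  using add_comm zero_add zero_closed by metis
lemma ex_inv: "x \<in> carr L \<Longrightarrow> \<exists>y\<in>carr L. ladd L x y = lzero L"
  using LL unfolding leibniz_def vspace_def by (elim conjE) blast
lemma add_left_cancel:
  assumes "a \<in> carr L" "b \<in> carr L" "c \<in> carr L" "ladd L a b = ladd L a c" shows "b = c"
proof -
  obtain y where y: "y \<in> carr L" "ladd L a y = lzero L" using ex_inv assms(1) by blast
  have e: "\<And>u. u \<in> carr L \<Longrightarrow> ladd L y (ladd L a u) = u"
  proof -
    fix u assume u: "u \<in> carr L"
    have "ladd L y (ladd L a u) = ladd L (ladd L y a) u" using add_assoc[of y a u] y u assms by simp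
    also have "\<dots> = ladd L (ladd L a y) u" using add_comm[of y a] y assms by simp
    finally show "ladd L y (ladd L a u) = u" using y u by simp
  qed
  show ?thesis using e[of b] e[of c] assms by metis
qed
lemma smul_add: "x \<in> carr L \<Longrightarrow> y \<in> carr L \<Longrightarrow> lsmul L c (ladd L x y) = ladd L (lsmul L c x) (lsmul L c y)"
  using LL unfolding leibniz_def vspace_def by (elim conjE) blast
lemma add_smul: "x \<in> carr L \<Longrightarrow> lsmul L (c + d) x = ladd L (lsmul L c x) (lsmul L d x)"
  using LL unfolding leibniz_def vspace_def by (elim conjE) blast
lemma smul_smul: "x \<in> carr L \<Longrightarrow> lsmul L (c * d) x = lsmul L c (lsmul L d x)"
  using LL unfolding leibniz_def vspace_def by (elim conjE) blast
lemma one_smul[simp]: "x \<in> carr L \<Longrightarrow> lsmul L 1 x = x"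
proof -
  have "\<forall>x\<in>carr L. lsmul L 1 x = x" using LL unfolding leibniz_def vspace_def by (elim conjE) assumption
  then show "x \<in> carr L \<Longrightarrow> lsmul L 1 x = x" by blast
qed
lemma br_add_left: "x \<in> carr L \<Longrightarrow> y \<in> carr L \<Longrightarrow> z \<in> carr L \<Longrightarrow> lbr L (ladd L x y) z = ladd L (lbr L x z) (lbr L y z)"
  using LL unfolding leibniz_def vspace_def by (elim conjE) blast
lemma br_add_right: "x \<in> carr L \<Longrightarrow> y \<in> carr L \<Longrightarrow> z \<in> carr L \<Longrightarrow> lbr L z (ladd L x y) = ladd L (lbr L z x) (lbr L z y)"
  using LL unfolding leibniz_def vspace_def by (elim conjE) blast
lemma br_smul_left: "x \<in> carr L \<Longrightarrow> y \<in> carr L \<Longrightarrow> lbr L (lsmul L c x) y = lsmul L c (lbr L x y)"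
  using LL unfolding leibniz_def vspace_def by (elim conjE) blast
lemma br_smul_right: "x \<in> carr L \<Longrightarrow> y \<in> carr L \<Longrightarrow> lbr L x (lsmul L c y) = lsmul L c (lbr L x y)"
  using LL unfolding leibniz_def vspace_def by (elim conjE) blast
lemma leib: "x \<in> carr L \<Longrightarrow> y \<in> carr L \<Longrightarrow> z \<in> carr L \<Longrightarrow>
   ladd L (lbr L x (lbr L y z)) (lbr L (lbr L x z) y) = lbr L (lbr L x y) z"
  using LL unfolding leibniz_def vspace_def by (elim conjE) blast

lemma zero_smul[simp]: assumes "x \<in> carr L" shows "lsmul L 0 x = lzero L"
proof -
  have "ladd L (lsmul L 0 x) (lsmul L 0 x) = ladd L (lsmul L 0 x) (lzero L)"
    using add_smul[OF assms, of 0 0] assms by simp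
  then show ?thesis using add_left_cancel assms by (metis smul_closed zero_closed)
qed
lemma smul_zero[simp]: "lsmul L c (lzero L) = lzero L"
proof -
  have "ladd L (lsmul L c (lzero L)) (lsmul L c (lzero L)) = ladd L (lsmul L c (lzero L)) (lzero L)"
    using smul_add[of "lzero L" "lzero L" c] by simp
  then show ?thesis using add_left_cancel by (metis smul_closed zero_closed)
qed
lemma br_zero_left[simp]: assumes "y \<in> carr L" shows "lbr L (lzero L) y = lzero L"
proof -
  have "ladd L (lbr L (lzero L) y) (lbr L (lzero L) y) = ladd L (lbr L (lzero L) y) (lzero L)"
    using br_add_left[of "lzero L" "lzero L" y] assms by simp
  then show ?thesis using add_left_cancel assms by (metis br_closed zero_closed)
qed
lemma br_zero_right[simp]: assumes "y \<in> carr L" shows "lbr L y (lzero L) = lzero L"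
proof -
  have "ladd L (lbr L y (lzero L)) (lbr L y (lzero L)) = ladd L (lbr L y (lzero L)) (lzero L)"
    using br_add_right[of "lzero L" "lzero L" y] assms by simp
  then show ?thesis using add_left_cancel assms by (metis br_closed zero_closed)
qed

definition neg where "neg x = lsmul L (-1) x"
lemma neg_closed[simp]: "x \<in> carr L \<Longrightarrow> neg x \<in> carr L" by (simp add: neg_def)
lemma add_neg[simp]: assumes "x \<in> carr L" shows "ladd L x (neg x) = lzero L"
proof -
  have "ladd L x (neg x) = lsmul L (1 + -1) x" using add_smul[OF assms, of 1 "-1"] assms by (simp add: neg_def)
  then show ?thesis using assms by simp
qed
lemma neg_add[simp]: "x \<in> carr L \<Longrightarrow> ladd L (neg x) x = lzero L"
  using add_comm add_neg neg_closed by metis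
lemma add_neg_cancel[simp]: "x \<in> carr L \<Longrightarrow> y \<in> carr L \<Longrightarrow> ladd L x (ladd L (neg x) y) = y"
  by (simp add: add_assoc[symmetric])
lemma neg_add_cancel[simp]: "x \<in> carr L \<Longrightarrow> y \<in> carr L \<Longrightarrow> ladd L (neg x) (ladd L x y) = y"
  by (simp add: add_assoc[symmetric])
lemma eq_diff: assumes "u \<in> carr L" "v \<in> carr L" "ladd L u (neg v) = lzero L" shows "u = v"
proof -
  have "ladd L v (ladd L (neg v) u) = v" using assms by (simp add: add_comm[of "neg v" u])
  then show ?thesis using assms by simp
qed
lemma diff_eq: assumes "u \<in> carr L" "v \<in> carr L" "w \<in> carr L" "ladd L u v = w" shows "u = ladd L w (neg v)"
  using assms by (metis add_assoc add_neg add_zero neg_closed)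
lemma neg_smul: "x \<in> carr L \<Longrightarrow> neg (lsmul L c x) = lsmul L c (neg x)"
  by (simp add: neg_def smul_smul[symmetric] mult.commute)
lemma neg_add_distrib: "x \<in> carr L \<Longrightarrow> y \<in> carr L \<Longrightarrow> neg (ladd L x y) = ladd L (neg x) (neg y)"
  by (simp add: neg_def smul_add)
lemma br_neg_left: "x \<in> carr L \<Longrightarrow> y \<in> carr L \<Longrightarrow> lbr L (neg x) y = neg (lbr L x y)"
  by (simp add: neg_def br_smul_left)
lemma br_neg_right: "x \<in> carr L \<Longrightarrow> y \<in> carr L \<Longrightarrow> lbr L x (neg y) = neg (lbr L x y)"
  by (simp add: neg_def br_smul_right)

lemma lie_closed[simp]: "x \<in> carr L \<Longrightarrow> y \<in> carr L \<Longrightarrow> lie_br L x y \<in> carr L"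
  by (simp add: lie_br_def)
lemma lie_comm_el: "x \<in> carr L \<Longrightarrow> y \<in> carr L \<Longrightarrow> lie_br L x y = lie_br L y x"
  by (simp add: lie_br_def add_comm)

end



context LA begin

lemma add_right_cancel: "a \<in> carr L \<Longrightarrow> b \<in> carr L \<Longrightarrow> c \<in> carr L \<Longrightarrow> ladd L b a = ladd L c a \<Longrightarrow> b = c"
  using add_left_cancel add_comm by metis

lemma annr: assumes x: "x \<in> carr L" and a: "a \<in> carr L" and y: "y \<in> carr L"
  shows "lbr L x (lie_br L a y) = lzero L"
proof -
  define p where "p = lbr L x (lbr L a y)"
  define q where "q = lbr L x (lbr L y a)"
  define P1 where "P1 = lbr L (lbr L x a) y"
  define Q1 where "Q1 = lbr L (lbr L x y) a"
  have c: "p \<in> carr L" "q \<in> carr L" "P1 \<in> carr L" "Q1 \<in> carr L" using x a y by (simp_all add: p_def q_def P1_def Q1_def)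
  have e1: "ladd L p Q1 = P1" using leib[OF x a y] by (simp add: p_def Q1_def P1_def)
  have e2: "ladd L q P1 = Q1" using leib[OF x y a] by (simp add: q_def Q1_def P1_def)
  have "ladd L (ladd L p q) (ladd L P1 Q1) = ladd L (ladd L p Q1) (ladd L q P1)"
    using c by (simp add: add_ac)
  also have "\<dots> = ladd L (lzero L) (ladd L P1 Q1)" using e1 e2 c by (simp add: add_comm)
  finally have "ladd L p q = lzero L" using add_right_cancel c by (metis add_closed zero_closed)
  then show ?thesis using x a y by (simp add: lie_br_def br_add_right p_def q_def)
qed

lemma key: assumes x: "x \<in> carr L" and a: "a \<in> carr L" and y: "y \<in> carr L"
  shows "ladd L (lie_br L (lbr L x a) y) (lie_br L x (lie_br L a y)) =
         ladd L (lie_br L x (lbr L a y)) (lbr L (lie_br L x y) a)"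
proof -
  have F1: "lbr L (lbr L x a) y = ladd L (lbr L x (lbr L a y)) (lbr L (lbr L x y) a)"
    using leib[OF x a y] by simp
  have F2: "lbr L (lbr L y x) a = ladd L (lbr L y (lbr L x a)) (lbr L (lbr L y a) x)"
    using leib[OF y x a] by simp
  have A: "lbr L x (lie_br L a y) = lzero L" using annr[OF x a y] .
  have "lie_br L x (lie_br L a y) = lbr L (lie_br L a y) x"
    using A x a y by (simp add: lie_br_def)
  also have "\<dots> = ladd L (lbr L (lbr L a y) x) (lbr L (lbr L y a) x)"
    using x a y by (simp add: lie_br_def br_add_left)
  finally have G: "lie_br L x (lie_br L a y) = ladd L (lbr L (lbr L a y) x) (lbr L (lbr L y a) x)" .
  show ?thesis
    using x a y
    using A[unfolded lie_br_def] by (simp add: G lie_br_def br_add_left F1 F2 add_ac)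
qed

lemma lie_add_left: "x \<in> carr L \<Longrightarrow> x' \<in> carr L \<Longrightarrow> y \<in> carr L \<Longrightarrow>
   lie_br L (ladd L x x') y = ladd L (lie_br L x y) (lie_br L x' y)"
  by (simp add: lie_br_def br_add_left br_add_right add_ac)
lemma lie_smul_left: "x \<in> carr L \<Longrightarrow> y \<in> carr L \<Longrightarrow>
   lie_br L (lsmul L c x) y = lsmul L c (lie_br L x y)"
  by (simp add: lie_br_def br_smul_left br_smul_right smul_add)
lemma lie_zero_left[simp]: "y \<in> carr L \<Longrightarrow> lie_br L (lzero L) y = lzero L"
  by (simp add: lie_br_def)

end



lemma ideal_gen_sup: "X \<subseteq> ideal_gen L X"
  by (auto simp: ideal_gen_def)
lemma ideal_gen_min: "ideal L I \<Longrightarrow> X \<subseteq> I \<Longrightarrow> ideal_gen L X \<subseteq> I"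
  by (auto simp: ideal_gen_def)

lemma iter_gamma: "(\<forall>i\<le>k. x i \<in> carr L) \<Longrightarrow> lie_iter L x k \<in> gamma_lie L (Suc k)"
proof (induction k)
  case 0 then show ?case by simp
next
  case (Suc k)
  then have "lie_iter L x k \<in> gamma_lie L (Suc k)" by simp
  moreover have "x (Suc k) \<in> carr L" using Suc.prems by simp
  ultimately show ?case
    using ideal_gen_sup[of "{lie_br L m x |m x. m \<in> gamma_lie L (Suc k) \<and> x \<in> carr L}" L]
    by (auto simp: lie_comm_def)
qed

context LA begin

lemma sub_carr: "subspace L I \<Longrightarrow> x \<in> I \<Longrightarrow> x \<in> carr L" by (auto simp: subspace_def)
lemma sub_zero: "subspace L I \<Longrightarrow> lzero L \<in> I" by (auto simp: subspace_def)
lemma sub_add: "subspace L I \<Longrightarrow> x \<in> I \<Longrightarrow> y \<in> I \<Longrightarrow> ladd L x y \<in> I" by (auto simp: subspace_def)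
lemma sub_smul: "subspace L I \<Longrightarrow> x \<in> I \<Longrightarrow> lsmul L c x \<in> I" by (auto simp: subspace_def)
lemma sub_neg: "subspace L I \<Longrightarrow> x \<in> I \<Longrightarrow> neg x \<in> I" by (auto simp: subspace_def neg_def)
lemma sub_cancel: assumes "subspace L I" "u \<in> carr L" "v \<in> I" "ladd L u v \<in> I" shows "u \<in> I"
proof -
  have "u = ladd L (ladd L u v) (neg v)" using assms sub_carr by (metis diff_eq add_closed)
  then show ?thesis using assms sub_add sub_neg by metis
qed
lemma ideal_sub: "ideal L I \<Longrightarrow> subspace L I" by (simp add: ideal_def)
lemma ideal_brl: "ideal L I \<Longrightarrow> x \<in> I \<Longrightarrow> y \<in> carr L \<Longrightarrow> lbr L x y \<in> I" by (simp add: ideal_def)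
lemma ideal_brr: "ideal L I \<Longrightarrow> x \<in> I \<Longrightarrow> y \<in> carr L \<Longrightarrow> lbr L y x \<in> I" by (simp add: ideal_def)
lemma ideal_lie: "ideal L I \<Longrightarrow> x \<in> I \<Longrightarrow> y \<in> carr L \<Longrightarrow> lie_br L x y \<in> I"
  unfolding lie_br_def by (meson ideal_brl ideal_brr ideal_sub sub_add)

lemma ideal_carr: "ideal L (carr L)"
  by (simp add: ideal_def subspace_def)

lemma ideal_gen_ideal: assumes "X \<subseteq> carr L" shows "ideal L (ideal_gen L X)"
proof -
  let ?F = "{I. ideal L I \<and> X \<subseteq> I}"
  have cF: "carr L \<in> ?F" using assms ideal_carr by simp
  have sub: "ideal_gen L X \<subseteq> carr L" using cF by (auto simp: ideal_gen_def)
  show ?thesis unfolding ideal_def subspace_def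
  proof (intro conjI ballI allI)
    show "ideal_gen L X \<subseteq> carr L" by (rule sub)
    show "lzero L \<in> ideal_gen L X" by (auto simp: ideal_gen_def ideal_def subspace_def)
    fix x assume x: "x \<in> ideal_gen L X"
    { fix y assume "y \<in> ideal_gen L X"
      then show "ladd L x y \<in> ideal_gen L X" using x by (auto simp: ideal_gen_def ideal_def subspace_def) }
    { fix c show "lsmul L c x \<in> ideal_gen L X" using x by (auto simp: ideal_gen_def ideal_def subspace_def) }
    { fix y assume "y \<in> carr L"
      then show "lbr L x y \<in> ideal_gen L X" "lbr L y x \<in> ideal_gen L X" using x by (auto simp: ideal_gen_def ideal_def) }
  qed
qed

lemma gamma_ideal: "ideal L (gamma_lie L k)"
proof (induction k rule: nat_less_induct)
  case (1 k)
  show ?case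
  proof (cases k)
    case 0 then show ?thesis by (simp add: ideal_carr)
  next
    case (Suc j)
    show ?thesis
    proof (cases j)
      case 0 then show ?thesis using Suc by (simp add: ideal_carr)
    next
      case (Suc i)
      have "ideal L (gamma_lie L (Suc i))" using 1 \<open>k = Suc j\<close> Suc by simp
      then have "gamma_lie L (Suc i) \<subseteq> carr L" using ideal_sub sub_carr by blast
      then have "{lie_br L m x |m x. m \<in> gamma_lie L (Suc i) \<and> x \<in> carr L} \<subseteq> carr L" by auto
      then show ?thesis using \<open>k = Suc j\<close> Suc by (simp add: lie_comm_def ideal_gen_ideal)
    qed
  qed
qed

lemma gamma_carr: "gamma_lie L k \<subseteq> carr L"
  using gamma_ideal ideal_sub sub_carr by blast

lemma zeta_ideal: "ideal L (zeta_lie L i)"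
proof (induction i)
  case 0
  show ?case by (simp add: ideal_def subspace_def)
next
  case (Suc i)
  note IH = Suc
  let ?Z = "zeta_lie L i" and ?Z' = "zeta_lie L (Suc i)"
  have sZ: "subspace L ?Z" using IH ideal_sub by blast
  have mono: "?Z \<subseteq> ?Z'"
    using IH sub_carr[OF sZ] ideal_lie by auto
  have sZ': "subspace L ?Z'"
    unfolding subspace_def
  proof (intro conjI ballI allI)
    show "?Z' \<subseteq> carr L" by auto
    show "lzero L \<in> ?Z'" using sub_zero[OF sZ] by simp
    fix x assume x: "x \<in> ?Z'"
    { fix y assume y: "y \<in> ?Z'"
      show "ladd L x y \<in> ?Z'" using x y sub_add[OF sZ] by (auto simp: lie_add_left) }
    { fix c show "lsmul L c x \<in> ?Z'" using x sub_smul[OF sZ] by (auto simp: lie_smul_left) }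
  qed
  show ?case unfolding ideal_def
  proof (intro conjI ballI)
    show "subspace L ?Z'" by (rule sZ')
    fix x y assume x: "x \<in> ?Z'" and a: "y \<in> carr L"
    have xc: "x \<in> carr L" using x by simp
    have r: "lbr L x y \<in> ?Z'"
    proof -
      { fix w assume w: "w \<in> carr L"
        have "lie_br L (lbr L x y) w \<in> ?Z"
        proof (rule sub_cancel[OF sZ])
          show "lie_br L (lbr L x y) w \<in> carr L" using xc a w by simp
          show "lie_br L x (lie_br L y w) \<in> ?Z" using x a w by simp
          have "ladd L (lie_br L x (lbr L y w)) (lbr L (lie_br L x w) y) \<in> ?Z"
            using x a w by (intro sub_add[OF sZ] ideal_brl[OF IH]) auto
          then show "ladd L (lie_br L (lbr L x y) w) (lie_br L x (lie_br L y w)) \<in> ?Z"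
            using key[OF xc a w] by simp
        qed }
      then show ?thesis using xc a by simp
    qed
    show "lbr L x y \<in> ?Z'" by (rule r)
    have l: "lie_br L x y \<in> ?Z'" using mono x a by auto
    have "ladd L (lbr L y x) (lbr L x y) = lie_br L x y" using xc a by (simp add: lie_br_def add_comm)
    then have "ladd L (lbr L y x) (lbr L x y) \<in> ?Z'" using l by simp
    then show "lbr L y x \<in> ?Z'" using sub_cancel[OF sZ' _ r] xc a by simp
  qed
qed

lemma zeta_carr: "zeta_lie L i \<subseteq> carr L"
  using zeta_ideal ideal_sub sub_carr by blast

lemma coset_iff: "y \<in> coset L I a \<longleftrightarrow> (\<exists>z\<in>I. y = ladd L a z)"
  by (auto simp: coset_def)
lemma coset_self: "subspace L I \<Longrightarrow> a \<in> carr L \<Longrightarrow> a \<in> coset L I a"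
  using sub_zero by (force simp: coset_def)
lemma coset_shift: assumes I: "subspace L I" and a: "a \<in> carr L" and z: "z \<in> I"
  shows "coset L I (ladd L a z) = coset L I a"
proof
  have zc: "z \<in> carr L" using sub_carr[OF I z] .
  show "coset L I (ladd L a z) \<subseteq> coset L I a"
  proof
    fix y assume "y \<in> coset L I (ladd L a z)"
    then obtain w where w: "w \<in> I" "y = ladd L (ladd L a z) w" by (auto simp: coset_iff)
    then have "y = ladd L a (ladd L z w)" using a zc sub_carr[OF I w(1)] by (simp add: add_assoc)
    then show "y \<in> coset L I a" using sub_add[OF I z w(1)] by (auto simp: coset_iff)
  qed
  show "coset L I a \<subseteq> coset L I (ladd L a z)"
  proof
    fix y assume "y \<in> coset L I a"
    then obtain w where w: "w \<in> I" "y = ladd L a w" by (auto simp: coset_iff)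
    have wc: "w \<in> carr L" using sub_carr[OF I w(1)] .
    then have "y = ladd L (ladd L a z) (ladd L (neg z) w)" using a zc w(2) by (simp add: add_assoc)
    then show "y \<in> coset L I (ladd L a z)" using sub_add[OF I sub_neg[OF I z] w(1)] by (auto simp: coset_iff)
  qed
qed
lemma coset_mem: "subspace L I \<Longrightarrow> a \<in> carr L \<Longrightarrow> b \<in> coset L I a \<Longrightarrow> coset L I b = coset L I a"
  using coset_shift by (auto simp: coset_iff)
lemma coset_eqD: assumes "subspace L I" "a \<in> carr L" "b \<in> carr L" "coset L I a = coset L I b"
  shows "\<exists>z\<in>I. b = ladd L a z"
  using coset_self[OF assms(1,3)] assms(4) by (auto simp: coset_iff)
lemma coset_carr: "subspace L I \<Longrightarrow> a \<in> carr L \<Longrightarrow> coset L I a \<subseteq> carr L"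
  using sub_carr by (auto simp: coset_iff)
lemma some_coset: "subspace L I \<Longrightarrow> a \<in> carr L \<Longrightarrow> (SOME x. x \<in> coset L I a) \<in> coset L I a"
  using coset_self by (metis someI)

lemma quot_add: assumes I: "ideal L I" and a: "a \<in> carr L" and b: "b \<in> carr L"
  shows "ladd (quot L I) (coset L I a) (coset L I b) = coset L I (ladd L a b)"
proof -
  have S: "subspace L I" using I ideal_sub by blast
  obtain z where z: "z \<in> I" "(SOME x. x \<in> coset L I a) = ladd L a z" using some_coset[OF S a] by (auto simp: coset_iff)
  obtain w where w: "w \<in> I" "(SOME x. x \<in> coset L I b) = ladd L b w" using some_coset[OF S b] by (auto simp: coset_iff)
  have zc: "z \<in> carr L" "w \<in> carr L" using z w sub_carr[OF S] by auto
  have "ladd L (ladd L a z) (ladd L b w) = ladd L (ladd L a b) (ladd L z w)" using a b zc by (simp add: add_ac)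
  then show ?thesis using z w coset_shift[OF S _ sub_add[OF S z(1) w(1)]] a b by (simp add: quot_def)
qed

lemma quot_smul: assumes I: "ideal L I" and a: "a \<in> carr L"
  shows "lsmul (quot L I) c (coset L I a) = coset L I (lsmul L c a)"
proof -
  have S: "subspace L I" using I ideal_sub by blast
  obtain z where z: "z \<in> I" "(SOME x. x \<in> coset L I a) = ladd L a z" using some_coset[OF S a] by (auto simp: coset_iff)
  have zc: "z \<in> carr L" using z sub_carr[OF S] by auto
  have "lsmul L c (ladd L a z) = ladd L (lsmul L c a) (lsmul L c z)" using a zc by (simp add: smul_add)
  then show ?thesis using z coset_shift[OF S _ sub_smul[OF S z(1)]] a by (simp add: quot_def)
qed

lemma quot_br: assumes I: "ideal L I" and a: "a \<in> carr L" and b: "b \<in> carr L"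
  shows "lbr (quot L I) (coset L I a) (coset L I b) = coset L I (lbr L a b)"
proof -
  have S: "subspace L I" using I ideal_sub by blast
  obtain z where z: "z \<in> I" "(SOME x. x \<in> coset L I a) = ladd L a z" using some_coset[OF S a] by (auto simp: coset_iff)
  obtain w where w: "w \<in> I" "(SOME x. x \<in> coset L I b) = ladd L b w" using some_coset[OF S b] by (auto simp: coset_iff)
  have zc: "z \<in> carr L" "w \<in> carr L" using z w sub_carr[OF S] by auto
  have "lbr L (ladd L a z) (ladd L b w) = ladd L (lbr L a b) (ladd L (lbr L a w) (ladd L (lbr L z b) (lbr L z w)))"
    using a b zc by (simp add: br_add_left br_add_right add_ac)
  moreover have "ladd L (lbr L a w) (ladd L (lbr L z b) (lbr L z w)) \<in> I"
    using a b z w by (meson I ideal_brl ideal_brr S sub_add zc)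
  ultimately show ?thesis using z w coset_shift[OF S] a b by (simp add: quot_def)
qed

lemma quot_zero: "lzero (quot L I) = coset L I (lzero L)" by (simp add: quot_def)
lemma quot_carr: "carr (quot L I) = coset L I ` carr L" by (simp add: quot_def)

end



lemma iter_cong: "(\<forall>i\<le>k. x i = y i) \<Longrightarrow> lie_iter L x k = lie_iter L y k"
  by (induction k) auto

definition WD :: "nat \<Rightarrow> ('k, 'a) lalg \<Rightarrow> bool" where
  "WD n L \<longleftrightarrow> (\<forall>x y. (\<forall>i\<le>n. x i \<in> carr L \<and> y i \<in> carr L \<and>
       coset L (zeta_lie L n) (x i) = coset L (zeta_lie L n) (y i)) \<longrightarrow> lie_iter L x n = lie_iter L y n)"

locale LH = A: LA L + B: LA M for L :: "('k::field, 'a) lalg" and M :: "('k, 'b) lalg" +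
  fixes f :: "'a \<Rightarrow> 'b" assumes hom: "lhom L M f"
begin

lemma f_closed[simp]: "x \<in> carr L \<Longrightarrow> f x \<in> carr M" using hom by (simp add: lhom_def)
lemma f_add: "x \<in> carr L \<Longrightarrow> y \<in> carr L \<Longrightarrow> f (ladd L x y) = ladd M (f x) (f y)" using hom by (simp add: lhom_def)
lemma f_br: "x \<in> carr L \<Longrightarrow> y \<in> carr L \<Longrightarrow> f (lbr L x y) = lbr M (f x) (f y)" using hom by (simp add: lhom_def)
lemma f_smul: "x \<in> carr L \<Longrightarrow> f (lsmul L c x) = lsmul M c (f x)" using hom by (simp add: lhom_def)
lemma f_zero[simp]: "f (lzero L) = lzero M"
proof -
  have "ladd M (f (lzero L)) (f (lzero L)) = ladd M (f (lzero L)) (lzero M)"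
    using f_add[of "lzero L" "lzero L"] by simp
  then show ?thesis using B.add_left_cancel by (metis A.zero_closed B.zero_closed f_closed)
qed
lemma f_neg: "x \<in> carr L \<Longrightarrow> f (A.neg x) = B.neg (f x)"
  by (simp add: A.neg_def B.neg_def f_smul)
lemma f_lie: "x \<in> carr L \<Longrightarrow> y \<in> carr L \<Longrightarrow> f (lie_br L x y) = lie_br M (f x) (f y)"
  by (simp add: lie_br_def f_add f_br)
lemma f_iter: "(\<forall>i\<le>k. x i \<in> carr L) \<Longrightarrow> f (lie_iter L x k) = lie_iter M (\<lambda>i. f (x i)) k"
proof (induction k)
  case 0 then show ?case by simp
next
  case (Suc k)
  have "lie_iter L x k \<in> carr L" using iter_gamma[of k x L] Suc.prems A.gamma_carr by auto
  then show ?case using Suc by (simp add: f_lie)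
qed
lemma f_diff: "x \<in> carr L \<Longrightarrow> y \<in> carr L \<Longrightarrow> f (ladd L x (A.neg y)) = ladd M (f x) (B.neg (f y))"
  by (simp add: f_add f_neg)

end

locale LS = LH + assumes surj: "f ` carr L = carr M"
begin

lemma img_ideal_gen: assumes X: "X \<subseteq> carr L" shows "f ` ideal_gen L X = ideal_gen M (f ` X)"
proof
  let ?J = "ideal_gen M (f ` X)"
  have fX: "f ` X \<subseteq> carr M" using X by auto
  have J: "ideal M ?J" using B.ideal_gen_ideal[OF fX] .
  let ?K = "{x \<in> carr L. f x \<in> ?J}"
  have K: "ideal L ?K" unfolding ideal_def subspace_def
  proof (intro conjI ballI allI)
    show "?K \<subseteq> carr L" by auto
    show "lzero L \<in> ?K" using B.sub_zero[OF B.ideal_sub[OF J]] by simp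
    fix x assume x: "x \<in> ?K"
    { fix y assume "y \<in> ?K" then show "ladd L x y \<in> ?K" using x B.sub_add[OF B.ideal_sub[OF J]] by (auto simp: f_add) }
    { fix c show "lsmul L c x \<in> ?K" using x B.sub_smul[OF B.ideal_sub[OF J]] by (auto simp: f_smul) }
    { fix y assume "y \<in> carr L" then show "lbr L x y \<in> ?K" "lbr L y x \<in> ?K"
        using x B.ideal_brl[OF J] B.ideal_brr[OF J] by (auto simp: f_br) }
  qed
  have "X \<subseteq> ?K" using X ideal_gen_sup[of "f ` X" M] by auto
  then have "ideal_gen L X \<subseteq> ?K" using ideal_gen_min[OF K] by blast
  then show "f ` ideal_gen L X \<subseteq> ?J" by auto
next
  let ?G = "ideal_gen L X"
  have G: "ideal L ?G" using A.ideal_gen_ideal[OF X] .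
  have Gc: "?G \<subseteq> carr L" using A.ideal_sub[OF G] A.sub_carr by blast
  have Y: "ideal M (f ` ?G)" unfolding ideal_def subspace_def
  proof (intro conjI ballI allI)
    show "f ` ?G \<subseteq> carr M" using Gc by auto
    show "lzero M \<in> f ` ?G" using A.sub_zero[OF A.ideal_sub[OF G]] f_zero by (metis image_eqI)
    fix x assume "x \<in> f ` ?G"
    then obtain a where a: "a \<in> ?G" "x = f a" by auto
    have ac: "a \<in> carr L" using a Gc by auto
    { fix y assume "y \<in> f ` ?G"
      then obtain b where b: "b \<in> ?G" "y = f b" by auto
      have "ladd M x y = f (ladd L a b)" using a b ac Gc by (auto simp: f_add)
      then show "ladd M x y \<in> f ` ?G" using A.sub_add[OF A.ideal_sub[OF G] a(1) b(1)] by auto }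
    { fix c
      have "lsmul M c x = f (lsmul L c a)" using a ac by (auto simp: f_smul)
      then show "lsmul M c x \<in> f ` ?G" using A.sub_smul[OF A.ideal_sub[OF G] a(1)] by auto }
    { fix y assume "y \<in> carr M"
      then obtain h where h: "h \<in> carr L" "y = f h" using surj by auto
      have "lbr M x y = f (lbr L a h)" "lbr M y x = f (lbr L h a)" using a ac h by (auto simp: f_br)
      then show "lbr M x y \<in> f ` ?G" "lbr M y x \<in> f ` ?G"
        using A.ideal_brl[OF G a(1) h(1)] A.ideal_brr[OF G a(1) h(1)] by auto }
  qed
  have "f ` X \<subseteq> f ` ?G" using ideal_gen_sup[of X L] by auto
  then show "ideal_gen M (f ` X) \<subseteq> f ` ?G" using ideal_gen_min[OF Y] by blast
qed

lemma img_gens: assumes G: "G \<subseteq> carr L"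
  shows "f ` {lie_br L m x |m x. m \<in> G \<and> x \<in> carr L} = {lie_br M m x |m x. m \<in> f ` G \<and> x \<in> carr M}"
proof
  show "f ` {lie_br L m x |m x. m \<in> G \<and> x \<in> carr L} \<subseteq> {lie_br M m x |m x. m \<in> f ` G \<and> x \<in> carr M}"
    using G by (force simp: f_lie)
  show "{lie_br M m x |m x. m \<in> f ` G \<and> x \<in> carr M} \<subseteq> f ` {lie_br L m x |m x. m \<in> G \<and> x \<in> carr L}"
  proof
    fix z assume "z \<in> {lie_br M m x |m x. m \<in> f ` G \<and> x \<in> carr M}"
    then obtain m x where mx: "m \<in> G" "x \<in> carr M" "z = lie_br M (f m) x" by auto
    obtain h where h: "h \<in> carr L" "x = f h" using mx(2) surj by auto
    have "z = f (lie_br L m h)" using mx h G by (auto simp: f_lie)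
    then show "z \<in> f ` {lie_br L m x |m x. m \<in> G \<and> x \<in> carr L}" using mx(1) h(1) by blast
  qed
qed

lemma img_gamma: "f ` gamma_lie L k = gamma_lie M k"
proof (induction k rule: nat_less_induct)
  case (1 k)
  show ?case
  proof (cases k)
    case 0 then show ?thesis using surj by simp
  next
    case (Suc j)
    show ?thesis
    proof (cases j)
      case 0 then show ?thesis using Suc surj by simp
    next
      case (Suc i)
      have IH: "f ` gamma_lie L (Suc i) = gamma_lie M (Suc i)" using 1 \<open>k = Suc j\<close> Suc by simp
      have Gc: "gamma_lie L (Suc i) \<subseteq> carr L" using A.gamma_carr by blast
      then have "{lie_br L m x |m x. m \<in> gamma_lie L (Suc i) \<and> x \<in> carr L} \<subseteq> carr L" by auto
      then show ?thesis using \<open>k = Suc j\<close> Suc IH img_gens[OF Gc]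
        by (simp add: lie_comm_def img_ideal_gen)
    qed
  qed
qed

lemma img_zeta: "f ` zeta_lie L i \<subseteq> zeta_lie M i"
proof (induction i)
  case 0 then show ?case by simp
next
  case (Suc i)
  show ?case
  proof
    fix z assume "z \<in> f ` zeta_lie L (Suc i)"
    then obtain x where x: "x \<in> carr L" "\<forall>y\<in>carr L. lie_br L x y \<in> zeta_lie L i" "z = f x" by auto
    have "\<forall>y\<in>carr M. lie_br M z y \<in> zeta_lie M i"
    proof
      fix y assume "y \<in> carr M"
      then obtain h where h: "h \<in> carr L" "y = f h" using surj by auto
      have "lie_br M z y = f (lie_br L x h)" using x h by (simp add: f_lie)
      then show "lie_br M z y \<in> zeta_lie M i" using Suc x(2) h(1) by blast
    qed
    then show "z \<in> zeta_lie M (Suc i)" using x by simp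
  qed
qed

end

locale LK = LS + fixes n :: nat
  assumes ker: "lkernel L M f \<inter> gamma_lie L (Suc n) = {lzero L}"
begin

lemma pre_zeta: "i \<le> n \<Longrightarrow> d \<in> gamma_lie L (Suc (n - i)) \<Longrightarrow> f d \<in> zeta_lie M i \<Longrightarrow> d \<in> zeta_lie L i"
proof (induction i arbitrary: d)
  case 0
  have "d \<in> carr L" using 0 A.gamma_carr by blast
  then have "d \<in> lkernel L M f \<inter> gamma_lie L (Suc n)" using 0 by (simp add: lkernel_def)
  then show ?case using ker by simp
next
  case (Suc i)
  have dc: "d \<in> carr L" using Suc.prems A.gamma_carr by blast
  have e: "n - i = Suc (n - Suc i)" using Suc.prems(1) by simp
  have "\<forall>y\<in>carr L. lie_br L d y \<in> zeta_lie L i"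
  proof
    fix y assume y: "y \<in> carr L"
    have "lie_br L d y \<in> gamma_lie L (Suc (n - i))"
      using Suc.prems(2) y e ideal_gen_sup[of "{lie_br L m x |m x. m \<in> gamma_lie L (Suc (n - Suc i)) \<and> x \<in> carr L}" L]
      by (auto simp: lie_comm_def)
    moreover have "f (lie_br L d y) \<in> zeta_lie M i" using Suc.prems(3) dc y by (simp add: f_lie)
    ultimately show "lie_br L d y \<in> zeta_lie L i" using Suc.IH Suc.prems(1) by simp
  qed
  then show ?case using dc by simp
qed

lemma pre_zeta_n: "d \<in> carr L \<Longrightarrow> f d \<in> zeta_lie M n \<Longrightarrow> d \<in> zeta_lie L n"
  using pre_zeta[of n d] by simp

lemma SZ1: "subspace L (zeta_lie L n)" using A.zeta_ideal A.ideal_sub by blast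
lemma SZ2: "subspace M (zeta_lie M n)" using B.zeta_ideal B.ideal_sub by blast

lemma coset_pre: assumes a: "a \<in> carr L" and b: "b \<in> carr L"
  and e: "coset M (zeta_lie M n) (f a) = coset M (zeta_lie M n) (f b)"
  shows "coset L (zeta_lie L n) a = coset L (zeta_lie L n) b"
proof -
  obtain z where z: "z \<in> zeta_lie M n" "f b = ladd M (f a) z" using B.coset_eqD[OF SZ2 _ _ e] a b by auto
  have zc: "z \<in> carr M" using z B.zeta_carr by blast
  have "f (ladd L b (A.neg a)) = z" using a b z zc by (simp add: f_diff B.add_ac)
  then have d: "ladd L b (A.neg a) \<in> zeta_lie L n" using pre_zeta_n a b z by simp
  have "b = ladd L a (ladd L b (A.neg a))" using a b by (metis A.add_lcomm A.add_neg A.add_zero A.neg_closed)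
  then show ?thesis using A.coset_shift[OF SZ1 a d] by simp
qed

lemma WD_transfer: assumes W: "WD n L" shows "WD n M"
  unfolding WD_def
proof (intro allI impI)
  fix y y' assume H: "\<forall>i\<le>n. y i \<in> carr M \<and> y' i \<in> carr M \<and>
       coset M (zeta_lie M n) (y i) = coset M (zeta_lie M n) (y' i)"
  define h where "h i = (SOME a. a \<in> carr L \<and> f a = y i)" for i
  define h' where "h' i = (SOME a. a \<in> carr L \<and> f a = y' i)" for i
  have hh: "\<forall>i\<le>n. h i \<in> carr L \<and> f (h i) = y i"
  proof (intro allI impI)
    fix i assume "i \<le> n"
    then have "\<exists>a. a \<in> carr L \<and> f a = y i" using H surj by (metis imageE)
    then show "h i \<in> carr L \<and> f (h i) = y i" unfolding h_def by (rule someI_ex)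
  qed
  have hh': "\<forall>i\<le>n. h' i \<in> carr L \<and> f (h' i) = y' i"
  proof (intro allI impI)
    fix i assume "i \<le> n"
    then have "\<exists>a. a \<in> carr L \<and> f a = y' i" using H surj by (metis imageE)
    then show "h' i \<in> carr L \<and> f (h' i) = y' i" unfolding h'_def by (rule someI_ex)
  qed
  have "\<forall>i\<le>n. h i \<in> carr L \<and> h' i \<in> carr L \<and> coset L (zeta_lie L n) (h i) = coset L (zeta_lie L n) (h' i)"
    using hh hh' H coset_pre by metis
  then have E: "lie_iter L h n = lie_iter L h' n" using W unfolding WD_def by blast
  have "lie_iter M y n = lie_iter M (\<lambda>i. f (h i)) n" using hh by (intro iter_cong) simp
  also have "\<dots> = f (lie_iter L h n)" using hh f_iter by simp
  also have "\<dots> = f (lie_iter L h' n)" using E by simp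
  also have "\<dots> = lie_iter M (\<lambda>i. f (h' i)) n" using hh' f_iter by simp
  also have "\<dots> = lie_iter M y' n" using hh' by (intro iter_cong) simp
  finally show "lie_iter M y n = lie_iter M y' n" .
qed

end




lemma qcarr: "carr (quot L I) = coset L I ` carr L" by (simp add: quot_def)

context LK begin

definition eta where "eta A = coset M (zeta_lie M n) (f (SOME a. a \<in> A))"

lemma eta_coset: assumes a: "a \<in> carr L" shows "eta (coset L (zeta_lie L n) a) = coset M (zeta_lie M n) (f a)"
proof -
  obtain z where z: "z \<in> zeta_lie L n" "(SOME x. x \<in> coset L (zeta_lie L n) a) = ladd L a z"
    using A.some_coset[OF SZ1 a] by (auto simp: A.coset_iff)
  have zc: "z \<in> carr L" using z A.zeta_carr by blast
  have fz: "f z \<in> zeta_lie M n" using img_zeta z by blast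
  show ?thesis unfolding eta_def using z a zc B.coset_shift[OF SZ2 _ fz] by (simp add: f_add)
qed

lemma eta_iso: "liso (quot L (zeta_lie L n)) (quot M (zeta_lie M n)) eta"
proof -
  have I1: "ideal L (zeta_lie L n)" by (rule A.zeta_ideal)
  have I2: "ideal M (zeta_lie M n)" by (rule B.zeta_ideal)
  have hom: "lhom (quot L (zeta_lie L n)) (quot M (zeta_lie M n)) eta"
    unfolding lhom_def qcarr
  proof (intro conjI ballI allI)
    fix X assume "X \<in> coset L (zeta_lie L n) ` carr L"
    then obtain a where a: "a \<in> carr L" "X = coset L (zeta_lie L n) a" by auto
    show "eta X \<in> coset M (zeta_lie M n) ` carr M" using a eta_coset by simp
    { fix c
      have "eta (lsmul (quot L (zeta_lie L n)) c X) = eta (coset L (zeta_lie L n) (lsmul L c a))"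
        using a A.quot_smul[OF I1] by simp
      also have "\<dots> = coset M (zeta_lie M n) (f (lsmul L c a))" using a eta_coset by simp
      also have "\<dots> = coset M (zeta_lie M n) (lsmul M c (f a))" using a f_smul by simp
      also have "\<dots> = lsmul (quot M (zeta_lie M n)) c (coset M (zeta_lie M n) (f a))"
        using a B.quot_smul[OF I2, of "f a" c] by simp
      also have "\<dots> = lsmul (quot M (zeta_lie M n)) c (eta X)" using a eta_coset by simp
      finally show "eta (lsmul (quot L (zeta_lie L n)) c X) = lsmul (quot M (zeta_lie M n)) c (eta X)" . }
    fix Y assume "Y \<in> coset L (zeta_lie L n) ` carr L"
    then obtain b where b: "b \<in> carr L" "Y = coset L (zeta_lie L n) b" by auto
    have "eta (ladd (quot L (zeta_lie L n)) X Y) = eta (coset L (zeta_lie L n) (ladd L a b))"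
      using a b A.quot_add[OF I1] by simp
    also have "\<dots> = coset M (zeta_lie M n) (f (ladd L a b))" using a b eta_coset by simp
    also have "\<dots> = coset M (zeta_lie M n) (ladd M (f a) (f b))" using a b f_add by simp
    also have "\<dots> = ladd (quot M (zeta_lie M n)) (coset M (zeta_lie M n) (f a)) (coset M (zeta_lie M n) (f b))"
      using a b B.quot_add[OF I2, of "f a" "f b"] by simp
    also have "\<dots> = ladd (quot M (zeta_lie M n)) (eta X) (eta Y)" using a b eta_coset by simp
    finally show "eta (ladd (quot L (zeta_lie L n)) X Y) = ladd (quot M (zeta_lie M n)) (eta X) (eta Y)" .
    have "eta (lbr (quot L (zeta_lie L n)) X Y) = eta (coset L (zeta_lie L n) (lbr L a b))"
      using a b A.quot_br[OF I1] by simp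
    also have "\<dots> = coset M (zeta_lie M n) (f (lbr L a b))" using a b eta_coset by simp
    also have "\<dots> = coset M (zeta_lie M n) (lbr M (f a) (f b))" using a b f_br by simp
    also have "\<dots> = lbr (quot M (zeta_lie M n)) (coset M (zeta_lie M n) (f a)) (coset M (zeta_lie M n) (f b))"
      using a b B.quot_br[OF I2, of "f a" "f b"] by simp
    also have "\<dots> = lbr (quot M (zeta_lie M n)) (eta X) (eta Y)" using a b eta_coset by simp
    finally show "eta (lbr (quot L (zeta_lie L n)) X Y) = lbr (quot M (zeta_lie M n)) (eta X) (eta Y)" .
  qed
  have inj: "inj_on eta (coset L (zeta_lie L n) ` carr L)"
  proof (rule inj_onI)
    fix X Y assume X: "X \<in> coset L (zeta_lie L n) ` carr L" and Y: "Y \<in> coset L (zeta_lie L n) ` carr L"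
      and e: "eta X = eta Y"
    obtain a where a: "a \<in> carr L" "X = coset L (zeta_lie L n) a" using X by auto
    obtain b where b: "b \<in> carr L" "Y = coset L (zeta_lie L n) b" using Y by auto
    have "coset M (zeta_lie M n) (f a) = coset M (zeta_lie M n) (f b)" using e a b by (simp add: eta_coset)
    from coset_pre[OF a(1) b(1) this] show "X = Y" using a b by simp
  qed
  have img: "eta ` (coset L (zeta_lie L n) ` carr L) = coset M (zeta_lie M n) ` carr M"
  proof
    show "eta ` (coset L (zeta_lie L n) ` carr L) \<subseteq> coset M (zeta_lie M n) ` carr M"
      using eta_coset by auto
    show "coset M (zeta_lie M n) ` carr M \<subseteq> eta ` (coset L (zeta_lie L n) ` carr L)"
    proof
      fix Z assume "Z \<in> coset M (zeta_lie M n) ` carr M"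
      then obtain y where y: "y \<in> carr M" "Z = coset M (zeta_lie M n) y" by auto
      obtain h where h: "h \<in> carr L" "y = f h" using y surj by auto
      show "Z \<in> eta ` (coset L (zeta_lie L n) ` carr L)" using h y eta_coset by auto
    qed
  qed
  show ?thesis unfolding liso_def bij_betw_def using hom inj img by (simp add: qcarr)
qed

lemma xi_iso: "liso (L\<lparr>carr := gamma_lie L (Suc n)\<rparr>) (M\<lparr>carr := gamma_lie M (Suc n)\<rparr>) f"
proof -
  let ?G = "gamma_lie L (Suc n)"
  have Gc: "?G \<subseteq> carr L" by (rule A.gamma_carr)
  have SG: "subspace L ?G" using A.gamma_ideal A.ideal_sub by blast
  have hom: "lhom (L\<lparr>carr := ?G\<rparr>) (M\<lparr>carr := gamma_lie M (Suc n)\<rparr>) f"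
  proof (unfold lhom_def, intro conjI ballI allI)
    fix x assume x: "x \<in> carr (L\<lparr>carr := ?G\<rparr>)"
    then have xG: "x \<in> ?G" and xc: "x \<in> carr L" using Gc by auto
    have "f x \<in> f ` ?G" using xG by blast
    then show "f x \<in> carr (M\<lparr>carr := gamma_lie M (Suc n)\<rparr>)" using img_gamma[of "Suc n"] by simp
    { fix c show "f (lsmul (L\<lparr>carr := ?G\<rparr>) c x) = lsmul (M\<lparr>carr := gamma_lie M (Suc n)\<rparr>) c (f x)"
        using xc f_smul by simp }
    fix y assume y: "y \<in> carr (L\<lparr>carr := ?G\<rparr>)"
    then have yc: "y \<in> carr L" using Gc by auto
    show "f (ladd (L\<lparr>carr := ?G\<rparr>) x y) = ladd (M\<lparr>carr := gamma_lie M (Suc n)\<rparr>) (f x) (f y)"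
      using xc yc f_add by simp
    show "f (lbr (L\<lparr>carr := ?G\<rparr>) x y) = lbr (M\<lparr>carr := gamma_lie M (Suc n)\<rparr>) (f x) (f y)"
      using xc yc f_br by simp
  qed
  have inj: "inj_on f ?G"
  proof (rule inj_onI)
    fix a b assume a: "a \<in> ?G" and b: "b \<in> ?G" and e: "f a = f b"
    have ac: "a \<in> carr L" "b \<in> carr L" using a b Gc by auto
    have d: "ladd L a (A.neg b) \<in> ?G" using A.sub_add[OF SG a A.sub_neg[OF SG b]] .
    have "f (ladd L a (A.neg b)) = lzero M" using ac e by (simp add: f_diff)
    then have "ladd L a (A.neg b) \<in> lkernel L M f \<inter> ?G" using d ac by (simp add: lkernel_def)
    then show "a = b" using ker A.eq_diff ac by auto
  qed
  show ?thesis unfolding liso_def bij_betw_def using hom inj img_gamma by simp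
qed

lemma compat: assumes W: "WD n M"
  shows "\<forall>x y. (\<forall>i\<le>n. x i \<in> carr L \<and> y i \<in> carr M \<and>
          eta (coset L (zeta_lie L n) (x i)) = coset M (zeta_lie M n) (y i)) \<longrightarrow>
        f (lie_iter L x n) = lie_iter M y n"
proof (intro allI impI)
  fix x y assume H: "\<forall>i\<le>n. x i \<in> carr L \<and> y i \<in> carr M \<and>
        eta (coset L (zeta_lie L n) (x i)) = coset M (zeta_lie M n) (y i)"
  have H2: "\<forall>i\<le>n. f (x i) \<in> carr M \<and> y i \<in> carr M \<and>
        coset M (zeta_lie M n) (f (x i)) = coset M (zeta_lie M n) (y i)"
  proof (intro allI impI)
    fix i assume "i \<le> n"
    then have "x i \<in> carr L" "y i \<in> carr M" "eta (coset L (zeta_lie L n) (x i)) = coset M (zeta_lie M n) (y i)"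
      using H by auto
    then show "f (x i) \<in> carr M \<and> y i \<in> carr M \<and>
        coset M (zeta_lie M n) (f (x i)) = coset M (zeta_lie M n) (y i)" using eta_coset by simp
  qed
  have "lie_iter M (\<lambda>i. f (x i)) n = lie_iter M y n"
    using mp[OF spec[OF spec[OF W[unfolded WD_def], of "\<lambda>i. f (x i)"], of y] H2] .
  moreover have "f (lie_iter L x n) = lie_iter M (\<lambda>i. f (x i)) n"
    using H by (intro f_iter) simp
  ultimately show "f (lie_iter L x n) = lie_iter M y n" by simp
qed

lemma isoc: assumes W: "WD n M" shows "isoclinic n L M"
  unfolding isoclinic_def
  by (intro exI[of _ eta] exI[of _ f] conjI eta_iso xi_iso compat[OF W])

end




definition closedL :: "('k, 'a) lalg \<Rightarrow> bool" where
  "closedL M \<longleftrightarrow> (\<forall>x\<in>carr M. \<forall>y\<in>carr M. ladd M x y \<in> carr M \<and> lbr M x y \<in> carr M) \<and>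
     (\<forall>c. \<forall>x\<in>carr M. lsmul M c x \<in> carr M)"

context LA begin
lemma closed_quot: assumes I: "ideal L I" shows "closedL (quot L I)"
  unfolding closedL_def qcarr
proof (intro conjI ballI allI)
  fix X assume "X \<in> coset L I ` carr L"
  then obtain a where a: "a \<in> carr L" "X = coset L I a" by auto
  { fix c show "lsmul (quot L I) c X \<in> coset L I ` carr L" using a quot_smul[OF I a(1), of c] by simp }
  fix Y assume "Y \<in> coset L I ` carr L"
  then obtain b where b: "b \<in> carr L" "Y = coset L I b" by auto
  show "ladd (quot L I) X Y \<in> coset L I ` carr L" using a b quot_add[OF I a(1) b(1)] by simp
  show "lbr (quot L I) X Y \<in> coset L I ` carr L" using a b quot_br[OF I a(1) b(1)] by simp
qed

lemma closed_gamma: "closedL (L\<lparr>carr := gamma_lie L k\<rparr>)"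
  using gamma_ideal[of k] unfolding closedL_def
  by (simp add: ideal_sub sub_add sub_smul ideal_brl gamma_carr[THEN subsetD])
end

lemma liso_inv: assumes f: "liso L M f" and cl: "closedL L" shows "liso M L (inv_into (carr L) f)"
proof -
  have bij: "bij_betw f (carr L) (carr M)" using f by (simp add: liso_def)
  have inj: "inj_on f (carr L)" and img: "f ` carr L = carr M" using bij by (auto simp: bij_betw_def)
  have hom: "lhom L M f" using f by (simp add: liso_def)
  let ?g = "inv_into (carr L) f"
  have gin: "\<And>x. x \<in> carr M \<Longrightarrow> ?g x \<in> carr L" using img by (metis inv_into_into)
  have fg: "\<And>x. x \<in> carr M \<Longrightarrow> f (?g x) = x" using img by (metis f_inv_into_f)
  have gf: "\<And>a. a \<in> carr L \<Longrightarrow> ?g (f a) = a" using inj by (metis inv_into_f_f)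
  have "lhom M L ?g" unfolding lhom_def
  proof (intro conjI ballI allI)
    fix x assume x: "x \<in> carr M"
    show "?g x \<in> carr L" using gin x .
    { fix c
      have "lsmul M c x = f (lsmul L c (?g x))" using hom x gin fg by (simp add: lhom_def)
      then show "?g (lsmul M c x) = lsmul L c (?g x)" using gf cl gin x by (simp add: closedL_def) }
    fix y assume y: "y \<in> carr M"
    have "ladd M x y = f (ladd L (?g x) (?g y))" using hom x y gin fg by (simp add: lhom_def)
    then show "?g (ladd M x y) = ladd L (?g x) (?g y)" using gf cl gin x y by (simp add: closedL_def)
    have "lbr M x y = f (lbr L (?g x) (?g y))" using hom x y gin fg by (simp add: lhom_def)
    then show "?g (lbr M x y) = lbr L (?g x) (?g y)" using gf cl gin x y by (simp add: closedL_def)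
  qed
  then show ?thesis unfolding liso_def using bij_betw_inv_into[OF bij] by simp
qed

lemma liso_comp: assumes f: "liso A B f" and g: "liso B C g" shows "liso A C (g \<circ> f)"
proof -
  have "lhom A C (g \<circ> f)" using f g by (simp add: liso_def lhom_def)
  moreover have "bij_betw (g \<circ> f) (carr A) (carr C)" using f g by (auto simp: liso_def intro: bij_betw_trans)
  ultimately show ?thesis by (simp add: liso_def)
qed

lemma iso_WD: assumes iso: "isoclinic n L1 L2" shows "WD n L1" "WD n L2"
proof -
  obtain \<eta> \<xi> where eta: "liso (quot L1 (zeta_lie L1 n)) (quot L2 (zeta_lie L2 n)) \<eta>"
    and xi: "liso (L1\<lparr>carr := gamma_lie L1 (Suc n)\<rparr>) (L2\<lparr>carr := gamma_lie L2 (Suc n)\<rparr>) \<xi>"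
    and C: "\<forall>x y. (\<forall>i\<le>n. x i \<in> carr L1 \<and> y i \<in> carr L2 \<and>
                 \<eta> (coset L1 (zeta_lie L1 n) (x i)) = coset L2 (zeta_lie L2 n) (y i))
              \<longrightarrow> \<xi> (lie_iter L1 x n) = lie_iter L2 y n"
    using iso unfolding isoclinic_def by blast
  have etab: "bij_betw \<eta> (coset L1 (zeta_lie L1 n) ` carr L1) (coset L2 (zeta_lie L2 n) ` carr L2)"
    using eta by (simp add: liso_def qcarr)
  have xinj: "inj_on \<xi> (gamma_lie L1 (Suc n))" using xi by (simp add: liso_def bij_betw_def)
  show "WD n L1" unfolding WD_def
  proof (intro allI impI)
    fix x x' assume H: "\<forall>i\<le>n. x i \<in> carr L1 \<and> x' i \<in> carr L1 \<and>
         coset L1 (zeta_lie L1 n) (x i) = coset L1 (zeta_lie L1 n) (x' i)"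
    define y where "y i = (SOME b. b \<in> carr L2 \<and> \<eta> (coset L1 (zeta_lie L1 n) (x i)) = coset L2 (zeta_lie L2 n) b)" for i
    have hy: "\<forall>i\<le>n. y i \<in> carr L2 \<and> \<eta> (coset L1 (zeta_lie L1 n) (x i)) = coset L2 (zeta_lie L2 n) (y i)"
    proof (intro allI impI)
      fix i assume "i \<le> n"
      then have "x i \<in> carr L1" using H by auto
      then have "\<eta> (coset L1 (zeta_lie L1 n) (x i)) \<in> \<eta> ` (coset L1 (zeta_lie L1 n) ` carr L1)" by blast
      then have "\<eta> (coset L1 (zeta_lie L1 n) (x i)) \<in> coset L2 (zeta_lie L2 n) ` carr L2"
        using etab by (simp add: bij_betw_def)
      then have "\<exists>b. b \<in> carr L2 \<and> \<eta> (coset L1 (zeta_lie L1 n) (x i)) = coset L2 (zeta_lie L2 n) b" by auto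
      then show "y i \<in> carr L2 \<and> \<eta> (coset L1 (zeta_lie L1 n) (x i)) = coset L2 (zeta_lie L2 n) (y i)"
        unfolding y_def by (rule someI_ex)
    qed
    have "\<xi> (lie_iter L1 x n) = lie_iter L2 y n" using C H hy by auto
    moreover have "\<xi> (lie_iter L1 x' n) = lie_iter L2 y n" using C H hy by auto
    moreover have "lie_iter L1 x n \<in> gamma_lie L1 (Suc n)" "lie_iter L1 x' n \<in> gamma_lie L1 (Suc n)"
      using H by (auto intro: iter_gamma)
    ultimately show "lie_iter L1 x n = lie_iter L1 x' n" using xinj by (metis inj_onD)
  qed
  show "WD n L2" unfolding WD_def
  proof (intro allI impI)
    fix y y' assume H: "\<forall>i\<le>n. y i \<in> carr L2 \<and> y' i \<in> carr L2 \<and>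
         coset L2 (zeta_lie L2 n) (y i) = coset L2 (zeta_lie L2 n) (y' i)"
    define x where "x i = (SOME a. a \<in> carr L1 \<and> \<eta> (coset L1 (zeta_lie L1 n) a) = coset L2 (zeta_lie L2 n) (y i))" for i
    have hx: "\<forall>i\<le>n. x i \<in> carr L1 \<and> \<eta> (coset L1 (zeta_lie L1 n) (x i)) = coset L2 (zeta_lie L2 n) (y i)"
    proof (intro allI impI)
      fix i assume "i \<le> n"
      then have "coset L2 (zeta_lie L2 n) (y i) \<in> \<eta> ` (coset L1 (zeta_lie L1 n) ` carr L1)"
        using H etab by (auto simp: bij_betw_def)
      then have "\<exists>a. a \<in> carr L1 \<and> \<eta> (coset L1 (zeta_lie L1 n) a) = coset L2 (zeta_lie L2 n) (y i)" by auto
      then show "x i \<in> carr L1 \<and> \<eta> (coset L1 (zeta_lie L1 n) (x i)) = coset L2 (zeta_lie L2 n) (y i)"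
        unfolding x_def by (rule someI_ex)
    qed
    have "\<xi> (lie_iter L1 x n) = lie_iter L2 y n" using C H hx by auto
    moreover have "\<xi> (lie_iter L1 x n) = lie_iter L2 y' n" using C H hx by auto
    ultimately show "lie_iter L2 y n = lie_iter L2 y' n" by simp
  qed
qed

lemma iso_sym: assumes iso: "isoclinic n L1 L2" and c1: "closedL (quot L1 (zeta_lie L1 n))"
  and c2: "closedL (L1\<lparr>carr := gamma_lie L1 (Suc n)\<rparr>)"
  shows "isoclinic n L2 L1"
proof -
  obtain \<eta> \<xi> where eta: "liso (quot L1 (zeta_lie L1 n)) (quot L2 (zeta_lie L2 n)) \<eta>"
    and xi: "liso (L1\<lparr>carr := gamma_lie L1 (Suc n)\<rparr>) (L2\<lparr>carr := gamma_lie L2 (Suc n)\<rparr>) \<xi>"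
    and C: "\<forall>x y. (\<forall>i\<le>n. x i \<in> carr L1 \<and> y i \<in> carr L2 \<and>
                 \<eta> (coset L1 (zeta_lie L1 n) (x i)) = coset L2 (zeta_lie L2 n) (y i))
              \<longrightarrow> \<xi> (lie_iter L1 x n) = lie_iter L2 y n"
    using iso unfolding isoclinic_def by blast
  let ?Q1 = "coset L1 (zeta_lie L1 n) ` carr L1"
  let ?G1 = "gamma_lie L1 (Suc n)"
  let ?e = "inv_into (carr (quot L1 (zeta_lie L1 n))) \<eta>"
  let ?x = "inv_into (carr (L1\<lparr>carr := ?G1\<rparr>)) \<xi>"
  have eta': "liso (quot L2 (zeta_lie L2 n)) (quot L1 (zeta_lie L1 n)) ?e" using liso_inv[OF eta c1] .
  have xi': "liso (L2\<lparr>carr := gamma_lie L2 (Suc n)\<rparr>) (L1\<lparr>carr := ?G1\<rparr>) ?x" using liso_inv[OF xi c2] .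
  have etab: "bij_betw \<eta> ?Q1 (coset L2 (zeta_lie L2 n) ` carr L2)"
    using eta by (simp add: liso_def qcarr)
  have xinj: "inj_on \<xi> ?G1" using xi by (simp add: liso_def bij_betw_def)
  have C': "\<forall>y x. (\<forall>i\<le>n. y i \<in> carr L2 \<and> x i \<in> carr L1 \<and>
                 ?e (coset L2 (zeta_lie L2 n) (y i)) = coset L1 (zeta_lie L1 n) (x i))
              \<longrightarrow> ?x (lie_iter L2 y n) = lie_iter L1 x n"
  proof (intro allI impI)
    fix y x assume H: "\<forall>i\<le>n. y i \<in> carr L2 \<and> x i \<in> carr L1 \<and>
                 ?e (coset L2 (zeta_lie L2 n) (y i)) = coset L1 (zeta_lie L1 n) (x i)"
    have H2: "\<forall>i\<le>n. x i \<in> carr L1 \<and> y i \<in> carr L2 \<and>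
                 \<eta> (coset L1 (zeta_lie L1 n) (x i)) = coset L2 (zeta_lie L2 n) (y i)"
    proof (intro allI impI)
      fix i assume i: "i \<le> n"
      have m: "coset L2 (zeta_lie L2 n) (y i) \<in> \<eta> ` ?Q1" using H i etab by (auto simp: bij_betw_def)
      have "\<eta> (?e (coset L2 (zeta_lie L2 n) (y i))) = coset L2 (zeta_lie L2 n) (y i)"
        using f_inv_into_f[OF m] by (simp add: qcarr)
      then show "x i \<in> carr L1 \<and> y i \<in> carr L2 \<and>
                 \<eta> (coset L1 (zeta_lie L1 n) (x i)) = coset L2 (zeta_lie L2 n) (y i)"
        using H i by auto
    qed
    have e: "\<xi> (lie_iter L1 x n) = lie_iter L2 y n" using C H2 by blast
    have g: "lie_iter L1 x n \<in> ?G1" using H by (auto intro: iter_gamma)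
    show "?x (lie_iter L2 y n) = lie_iter L1 x n" using inv_into_f_f[OF xinj g] e by simp
  qed
  show ?thesis unfolding isoclinic_def using eta' xi' C' by blast
qed

lemma iso_trans: assumes i1: "isoclinic n L1 L2" and i2: "isoclinic n L2 L3"
  shows "isoclinic n L1 L3"
proof -
  obtain \<eta> \<xi> where eta: "liso (quot L1 (zeta_lie L1 n)) (quot L2 (zeta_lie L2 n)) \<eta>"
    and xi: "liso (L1\<lparr>carr := gamma_lie L1 (Suc n)\<rparr>) (L2\<lparr>carr := gamma_lie L2 (Suc n)\<rparr>) \<xi>"
    and C: "\<forall>x y. (\<forall>i\<le>n. x i \<in> carr L1 \<and> y i \<in> carr L2 \<and>
                 \<eta> (coset L1 (zeta_lie L1 n) (x i)) = coset L2 (zeta_lie L2 n) (y i))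
              \<longrightarrow> \<xi> (lie_iter L1 x n) = lie_iter L2 y n"
    using i1 unfolding isoclinic_def by blast
  obtain \<eta>2 \<xi>2 where eta2: "liso (quot L2 (zeta_lie L2 n)) (quot L3 (zeta_lie L3 n)) \<eta>2"
    and xi2: "liso (L2\<lparr>carr := gamma_lie L2 (Suc n)\<rparr>) (L3\<lparr>carr := gamma_lie L3 (Suc n)\<rparr>) \<xi>2"
    and C2: "\<forall>x y. (\<forall>i\<le>n. x i \<in> carr L2 \<and> y i \<in> carr L3 \<and>
                 \<eta>2 (coset L2 (zeta_lie L2 n) (x i)) = coset L3 (zeta_lie L3 n) (y i))
              \<longrightarrow> \<xi>2 (lie_iter L2 x n) = lie_iter L3 y n"
    using i2 unfolding isoclinic_def by blast
  have etab: "bij_betw \<eta> (coset L1 (zeta_lie L1 n) ` carr L1) (coset L2 (zeta_lie L2 n) ` carr L2)"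
    using eta by (simp add: liso_def qcarr)
  have C3: "\<forall>x z. (\<forall>i\<le>n. x i \<in> carr L1 \<and> z i \<in> carr L3 \<and>
                 (\<eta>2 \<circ> \<eta>) (coset L1 (zeta_lie L1 n) (x i)) = coset L3 (zeta_lie L3 n) (z i))
              \<longrightarrow> (\<xi>2 \<circ> \<xi>) (lie_iter L1 x n) = lie_iter L3 z n"
  proof (intro allI impI)
    fix x z assume H: "\<forall>i\<le>n. x i \<in> carr L1 \<and> z i \<in> carr L3 \<and>
                 (\<eta>2 \<circ> \<eta>) (coset L1 (zeta_lie L1 n) (x i)) = coset L3 (zeta_lie L3 n) (z i)"
    define y where "y i = (SOME b. b \<in> carr L2 \<and> \<eta> (coset L1 (zeta_lie L1 n) (x i)) = coset L2 (zeta_lie L2 n) b)" for i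
    have hy: "\<forall>i\<le>n. y i \<in> carr L2 \<and> \<eta> (coset L1 (zeta_lie L1 n) (x i)) = coset L2 (zeta_lie L2 n) (y i)"
    proof (intro allI impI)
      fix i assume "i \<le> n"
      then have "x i \<in> carr L1" using H by auto
      then have "\<eta> (coset L1 (zeta_lie L1 n) (x i)) \<in> \<eta> ` (coset L1 (zeta_lie L1 n) ` carr L1)" by blast
      then have "\<eta> (coset L1 (zeta_lie L1 n) (x i)) \<in> coset L2 (zeta_lie L2 n) ` carr L2"
        using etab by (simp add: bij_betw_def)
      then have "\<exists>b. b \<in> carr L2 \<and> \<eta> (coset L1 (zeta_lie L1 n) (x i)) = coset L2 (zeta_lie L2 n) b" by auto
      then show "y i \<in> carr L2 \<and> \<eta> (coset L1 (zeta_lie L1 n) (x i)) = coset L2 (zeta_lie L2 n) (y i)"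
        unfolding y_def by (rule someI_ex)
    qed
    have e1: "\<xi> (lie_iter L1 x n) = lie_iter L2 y n" using C H hy by auto
    have "\<forall>i\<le>n. y i \<in> carr L2 \<and> z i \<in> carr L3 \<and>
                 \<eta>2 (coset L2 (zeta_lie L2 n) (y i)) = coset L3 (zeta_lie L3 n) (z i)"
      using H hy by (metis comp_apply)
    then have e2: "\<xi>2 (lie_iter L2 y n) = lie_iter L3 z n" using C2 by blast
    show "(\<xi>2 \<circ> \<xi>) (lie_iter L1 x n) = lie_iter L3 z n" using e1 e2 by simp
  qed
  show ?thesis unfolding isoclinic_def
    using liso_comp[OF eta eta2] liso_comp[OF xi xi2] C3 by blast
qed

lemma iso_sym_L: "leibniz L1 \<Longrightarrow> isoclinic n L1 L2 \<Longrightarrow> isoclinic n L2 L1"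
  using iso_sym LA.closed_quot LA.closed_gamma LA.zeta_ideal LA.intro by metis




lemma LK_I: "leibniz L \<Longrightarrow> leibniz M \<Longrightarrow> lhom L M f \<Longrightarrow> f ` carr L = carr M \<Longrightarrow>
   lkernel L M f \<inter> gamma_lie L (Suc n) = {lzero L} \<Longrightarrow> LK L M f n"
  by (simp add: LK_def LS_def LH_def LA_def LK_axioms_def LS_axioms_def LH_axioms_def)

lemma isoc_of_hom_WD: "leibniz L \<Longrightarrow> leibniz M \<Longrightarrow> lhom L M f \<Longrightarrow> f ` carr L = carr M \<Longrightarrow>
   lkernel L M f \<inter> gamma_lie L (Suc n) = {lzero L} \<Longrightarrow> WD n M \<Longrightarrow> isoclinic n L M"
  using LK_I LK.isoc by metis

lemma isoc_of_hom_WD': "leibniz L \<Longrightarrow> leibniz M \<Longrightarrow> lhom L M f \<Longrightarrow> f ` carr L = carr M \<Longrightarrow>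
   lkernel L M f \<inter> gamma_lie L (Suc n) = {lzero L} \<Longrightarrow> WD n L \<Longrightarrow> isoclinic n L M"
  using LK_I LK.isoc LK.WD_transfer by metis

definition emb :: "('k, 'a) lalg \<Rightarrow> ('k, 'b) lalg \<Rightarrow> ('k, 'a \<times> 'b) lalg" where
  "emb L1 L2 = \<lparr>carr = (\<lambda>y. (lzero L1, y)) ` carr L2,
     ladd = (\<lambda>p q. (lzero L1, ladd L2 (snd p) (snd q))),
     lzero = (lzero L1, lzero L2),
     lsmul = (\<lambda>c p. (lzero L1, lsmul L2 c (snd p))),
     lbr = (\<lambda>p q. (lzero L1, lbr L2 (snd p) (snd q)))\<rparr>"

context LA begin

lemma emb_leibniz: "leibniz (emb L1 L)"
proof -
  have ex: "\<forall>x\<in>carr (emb L1 L). \<exists>y\<in>carr (emb L1 L). ladd (emb L1 L) x y = lzero (emb L1 L)"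
  proof
    fix x assume "x \<in> carr (emb L1 L)"
    then obtain u where u: "u \<in> carr L" "x = (lzero L1, u)" by (auto simp: emb_def)
    have "(lzero L1, neg u) \<in> carr (emb L1 L)" using u by (auto simp: emb_def)
    moreover have "ladd (emb L1 L) x (lzero L1, neg u) = lzero (emb L1 L)" using u by (simp add: emb_def)
    ultimately show "\<exists>y\<in>carr (emb L1 L). ladd (emb L1 L) x y = lzero (emb L1 L)" by blast
  qed
  show ?thesis unfolding leibniz_def vspace_def
    apply (intro conjI ex)
    apply (auto simp: emb_def add_ac smul_add add_smul smul_smul br_add_left br_add_right
         br_smul_left br_smul_right leib)
    done
qed

lemma emb_hom: "lhom (emb L1 L) L snd"
  by (auto simp: lhom_def emb_def)

lemma emb_surj: "snd ` carr (emb L1 L) = carr L"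
  by (force simp: emb_def)

lemma emb_ker: "lkernel (emb L1 L) L snd \<inter> gamma_lie (emb L1 L) (Suc n) = {lzero (emb L1 L)}"
proof -
  interpret E: LA "emb L1 L" by (rule LA.intro, rule emb_leibniz)
  have "lzero (emb L1 L) \<in> gamma_lie (emb L1 L) (Suc n)"
    using E.sub_zero[OF E.ideal_sub[OF E.gamma_ideal]] .
  moreover have "lkernel (emb L1 L) L snd = {lzero (emb L1 L)}"
    by (auto simp: lkernel_def emb_def)
  ultimately show ?thesis by blast
qed

end

theorem mainTheorem9:
  fixes n :: nat
    and L1 :: "('k::field, 'a) lalg" and L2 :: "('k, 'b) lalg"
  assumes half: "(2::'k) \<noteq> 0"
    and l1: "leibniz L1" and l2: "leibniz L2"
  shows "(isoclinic n L1 L2 \<longrightarrow>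
            (\<exists>(H :: ('k, 'a \<times> 'b) lalg) \<theta>. leibniz H \<and> isoclinic n H L1 \<and>
                lhom H L2 \<theta> \<and> \<theta> ` carr H = carr L2 \<and>
                lkernel H L2 \<theta> \<inter> gamma_lie H (Suc n) = {lzero H}))
       \<and> (\<forall>(H :: ('k, 'c) lalg) \<theta>. leibniz H \<and> isoclinic n H L1 \<and>
                lhom H L2 \<theta> \<and> \<theta> ` carr H = carr L2 \<and>
                lkernel H L2 \<theta> \<inter> gamma_lie H (Suc n) = {lzero H}
              \<longrightarrow> isoclinic n L1 L2)"
proof (intro conjI impI allI)
  interpret B: LA L2 by (rule LA.intro, rule l2)
  assume iso: "isoclinic n L1 L2"
  let ?H = "emb L1 L2"
  have lH: "leibniz ?H" by (rule B.emb_leibniz)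
  have W: "WD n L2" using iso_WD(2)[OF iso] .
  have "isoclinic n ?H L2"
    using isoc_of_hom_WD[OF lH l2 B.emb_hom B.emb_surj B.emb_ker W] .
  moreover have "isoclinic n L2 L1" using iso_sym_L[OF l1 iso] .
  ultimately have "isoclinic n ?H L1" by (rule iso_trans)
  then show "\<exists>(H :: ('k, 'a \<times> 'b) lalg) \<theta>. leibniz H \<and> isoclinic n H L1 \<and>
                lhom H L2 \<theta> \<and> \<theta> ` carr H = carr L2 \<and>
                lkernel H L2 \<theta> \<inter> gamma_lie H (Suc n) = {lzero H}"
    using lH B.emb_hom B.emb_surj B.emb_ker by blast
next
  fix H :: "('k, 'c) lalg" and \<theta>
  assume A: "leibniz H \<and> isoclinic n H L1 \<and>
                lhom H L2 \<theta> \<and> \<theta> ` carr H = carr L2 \<and>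
                lkernel H L2 \<theta> \<inter> gamma_lie H (Suc n) = {lzero H}"
  then have lH: "leibniz H" and iso: "isoclinic n H L1" and hom: "lhom H L2 \<theta>"
    and surj: "\<theta> ` carr H = carr L2" and ker: "lkernel H L2 \<theta> \<inter> gamma_lie H (Suc n) = {lzero H}"
    by auto
  have "isoclinic n H L2" using isoc_of_hom_WD'[OF lH l2 hom surj ker iso_WD(1)[OF iso]] .
  moreover have "isoclinic n L1 H" using iso_sym_L[OF lH iso] .
  ultimately show "isoclinic n L1 L2" using iso_trans by blast
qed



end
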